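(* Let $\mathbb{K}$ be an infinite field of characteristic zero, let $G$ be a bipartite graph on $n\ge 5$ vertices and $w(G)$ its whiskered graph, on vertex set $[2n]$. Write $J(w(G))=(x_{i_{1,1}}\cdots x_{i_{1,r_1}},\dots,x_{i_{s,1}}\cdots x_{i_{s,r_s}})\subset\mathbb{K}[x_1,\dots,x_{2n}]$ and let $\Delta=\langle\{i_{1,1},\dots,i_{1,r_1}\},\dots,\{i_{s,1},\dots,i_{s,r_s}\}\rangle$. Then $A(\Delta)$ is a level monomial algebra that fails the strong Lefschetz property.
   Context: The whiskered graph $w(G)$ of a graph $G$ with vertices $v_1,\dots,v_n$ has vertex set $\{v_1,\dots,v_n,w_1,\dots,w_n\}$ and edge set $E(G)\cup\{v_iw_i:i\in[n]\}$. For a graph $H$, its facet ideal is $\mathcal{F}(H)=(x_ix_j:\{i,j\}\in E(H))$; if $\mathcal{F}(H)=\bigcap_k (x_{i_{k,1}},\dots,x_{i_{k,r_k}})$ is its primary decomposition, the cover ideal is $J(H)=(x_{i_{k,1}}\cdots x_{i_{k,r_k}}:k)$. $\langle F_1,\dots,F_s\rangle$ denotes the simplicial complex with facets $F_1,\dots,F_s$. For a simplicial complex $\Delta$ on $[N]$, with $S=\mathbb{K}[x_1,\dots,x_N]$, $\mathcal{N}(\Delta)=(x_\tau:\tau\subseteq[N],\tau\notin\Delta)$ and $A(\Delta)=S/(\mathcal{N}(\Delta)+(x_1^2,\dots,x_N^2))$. A graded artinian algebra $A$ with top nonzero degree $d$ is level if its socle $\{f: fA_1=0\}$ equals $A_d$.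 $A$ has the strong Lefschetz property if for a general linear form $L$ all maps $\times L^j:A_i\to A_{i+j}$ have full rank. *)

theory Defs
  imports "HOL-Library.Poly_Mapping"
begin

(* Polynomials in countably many variables x_0, x_1, ... over 'k:
   coefficient functions on monomials (exponent vectors). *)
type_synonym 'k mpoly = "(nat \<Rightarrow>\<^sub>0 nat) \<Rightarrow>\<^sub>0 'k"

definition var :: "nat \<Rightarrow> 'k::comm_ring_1 mpoly" where
  "var i = Poly_Mapping.single (Poly_Mapping.single i 1) 1"

definition xmon :: "nat set \<Rightarrow> 'k::comm_ring_1 mpoly" where
  "xmon \<tau> = (\<Prod>i\<in>\<tau>. var i)"

definition mdeg :: "(nat \<Rightarrow>\<^sub>0 nat) \<Rightarrow> nat" where
  "mdeg m = (\<Sum>i\<in>Poly_Mapping.keys m. Poly_Mapping.lookup m i)"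

definition polyring :: "nat \<Rightarrow> 'k::comm_ring_1 mpoly set" where
  "polyring N = {p. \<forall>m\<in>Poly_Mapping.keys p. Poly_Mapping.keys m \<subseteq> {1..N}}"

(* homogeneous of degree d (0 is homogeneous of every degree) *)
definition homog :: "nat \<Rightarrow> 'k::comm_ring_1 mpoly \<Rightarrow> bool" where
  "homog d p \<longleftrightarrow> (\<forall>m\<in>Poly_Mapping.keys p. mdeg m = d)"

inductive_set ideal_gen :: "'k::comm_ring_1 mpoly set \<Rightarrow> 'k mpoly set \<Rightarrow> 'k mpoly set"
  for R Gs where
  zero: "0 \<in> ideal_gen R Gs"
| gen: "g \<in> Gs \<Longrightarrow> g \<in> ideal_gen R Gs"
| add: "a \<in> ideal_gen R Gs \<Longrightarrow> b \<in> ideal_gen R Gs \<Longrightarrow> a + b \<in> ideal_gen R Gs"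
| mult: "a \<in> ideal_gen R Gs \<Longrightarrow> r \<in> R \<Longrightarrow> r * a \<in> ideal_gen R Gs"

definition simple_graph :: "nat set \<Rightarrow> nat set set \<Rightarrow> bool" where
  "simple_graph V E \<longleftrightarrow> (\<forall>e\<in>E. \<exists>a b. e = {a, b} \<and> a \<noteq> b \<and> a \<in> V \<and> b \<in> V)"

definition bipartite :: "nat set \<Rightarrow> nat set set \<Rightarrow> bool" where
  "bipartite V E \<longleftrightarrow> (\<exists>A\<subseteq>V. \<forall>e\<in>E. card (e \<inter> A) = 1)"

(* whiskered graph of a graph on {1..n}: vertices v_i = i, w_i = n + i *)
definition whisker_edges :: "nat \<Rightarrow> nat set set \<Rightarrow> nat set set" where
  "whisker_edges n E = E \<union> {{i, n + i} | i. i \<in> {1..n}}"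

definition vertex_cover :: "nat set \<Rightarrow> nat set set \<Rightarrow> nat set \<Rightarrow> bool" where
  "vertex_cover V E C \<longleftrightarrow> C \<subseteq> V \<and> (\<forall>e\<in>E. e \<inter> C \<noteq> {})"

definition min_vertex_cover :: "nat set \<Rightarrow> nat set set \<Rightarrow> nat set \<Rightarrow> bool" where
  "min_vertex_cover V E C \<longleftrightarrow> vertex_cover V E C \<and> (\<forall>D. D \<subset> C \<longrightarrow> \<not> vertex_cover V E D)"

(* Supports of the minimal monomial generators of the cover ideal J(H):
   the primes in the (irredundant) primary decomposition of the edge ideal F(H)
   are (x_i : i \<in> C) for C a minimal vertex cover of H. *)
definition cover_ideal_supports :: "nat set \<Rightarrow> nat set set \<Rightarrow> nat set set" where
  "cover_ideal_supports V E = {C. min_vertex_cover V E C}"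

definition gen_complex :: "nat set set \<Rightarrow> nat set set" where
  "gen_complex Fs = {\<tau>. \<exists>F\<in>Fs. \<tau> \<subseteq> F}"

definition defining_ideal :: "nat \<Rightarrow> nat set set \<Rightarrow> 'k::comm_ring_1 mpoly set" where
  "defining_ideal N \<Delta> = ideal_gen (polyring N)
     ({xmon \<tau> | \<tau>. \<tau> \<subseteq> {1..N} \<and> \<tau> \<notin> \<Delta>} \<union> {var i ^ 2 | i. i \<in> {1..N}})"

(* A = S/I is level: with d the top nonzero degree, the socle {f : f A_1 = 0} equals A_d *)
definition level_quot :: "nat \<Rightarrow> 'k::comm_ring_1 mpoly set \<Rightarrow> bool" where
  "level_quot N I \<longleftrightarrow> (\<exists>d.
     (\<exists>g\<in>polyring N. homog d g \<and> g \<notin> I) \<and>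
     (\<forall>e>d. \<forall>g\<in>polyring N. homog e g \<longrightarrow> g \<in> I) \<and>
     (\<forall>f\<in>polyring N. (\<forall>i\<in>{1..N}. var i * f \<in> I) \<longleftrightarrow>
                       (\<exists>g\<in>polyring N. homog d g \<and> f - g \<in> I)))"

(* multiplication by L^j from A_i to A_{i+j} has full rank (injective or surjective) *)
definition full_rank_mult :: "nat \<Rightarrow> 'k::comm_ring_1 mpoly set \<Rightarrow> 'k mpoly \<Rightarrow> nat \<Rightarrow> nat \<Rightarrow> bool" where
  "full_rank_mult N I L i j \<longleftrightarrow>
     (\<forall>f\<in>polyring N. homog i f \<longrightarrow> L ^ j * f \<in> I \<longrightarrow> f \<in> I) \<or>
     (\<forall>g\<in>polyring N. homog (i + j) g \<longrightarrow>
        (\<exists>f\<in>polyring N. homog i f \<and> g - L ^ j * f \<in> I))"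

definition strong_lefschetz :: "nat \<Rightarrow> 'k::comm_ring_1 mpoly set \<Rightarrow> bool" where
  "strong_lefschetz N I \<longleftrightarrow>
     (\<exists>L\<in>polyring N. homog 1 L \<and> (\<forall>i j. full_rank_mult N I L i j))"

end

theory Submission
  imports Defs "HOL.Vector_Spaces"
begin


abbreviation lk where "lk \<equiv> Poly_Mapping.lookup"
abbreviation sg where "sg \<equiv> Poly_Mapping.single"
abbreviation ks where "ks \<equiv> Poly_Mapping.keys"

lemma lookup_minus_nat: "lk (a - b) i = lk a i - lk (b :: 'x \<Rightarrow>\<^sub>0 nat) i"
  by transfer simp

lemma lookup_single_mult_shift:
  "lk (sg (a::'x \<Rightarrow>\<^sub>0 nat) (c::'k::comm_ring_1) * p) (a + k) = c * lk p k"
proof -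
  have "lk (sg a c * p) (a + k)
     = (\<Sum>l. lk (sg a c) l * (\<Sum>q. lk p q when a + k = l + q))"
    by (rule lookup_mult)
  also have "\<dots> = (\<Sum>l. (c when a = l) * (\<Sum>q. lk p q when a + k = l + q))"
    by (simp add: lookup_single)
  also have "\<dots> = c * (\<Sum>q. lk p q when a + k = a + q)"
    by (simp add: when_mult)
  also have "\<dots> = c * (\<Sum>q. lk p q when k = q)"
    by simp
  also have "\<dots> = c * lk p k" by simp
  finally show ?thesis .
qed

lemma lookup_const_mult: "lk (sg 0 (c::'k::comm_ring_1) * (p::'k mpoly)) k = c * lk p k"
  using lookup_single_mult_shift[of 0 c p k] by simp

lemma keys_add_nat: "ks (a + b) = ks a \<union> ks (b :: 'x \<Rightarrow>\<^sub>0 nat)"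
  by (auto simp: in_keys_iff lookup_add)

definition ind :: "nat set \<Rightarrow> (nat \<Rightarrow>\<^sub>0 nat)" where
  "ind \<tau> = (\<Sum>i\<in>\<tau>. sg i 1)"

lemma lookup_ind: "finite \<tau> \<Longrightarrow> lk (ind \<tau>) i = (if i \<in> \<tau> then 1 else 0)"
  unfolding ind_def by (simp add: lookup_sum lookup_single when_def)

lemma keys_ind: "finite \<tau> \<Longrightarrow> ks (ind \<tau>) = \<tau>"
  by (auto simp: in_keys_iff lookup_ind split: if_splits)

lemma ind_insert: "finite \<tau> \<Longrightarrow> i \<notin> \<tau> \<Longrightarrow> ind (insert i \<tau>) = sg i 1 + ind \<tau>"
  unfolding ind_def by simp

lemma xmon_eq: "finite \<tau> \<Longrightarrow> (xmon \<tau> :: 'k::comm_ring_1 mpoly) = sg (ind \<tau>) 1"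
proof (induction \<tau> rule: finite_induct)
  case empty
  then show ?case by (simp add: xmon_def ind_def)
next
  case (insert i F)
  then show ?case
    by (simp add: xmon_def ind_insert var_def mult_single)
qed

lemma var_pow2: "(var i :: 'k::comm_ring_1 mpoly) ^ 2 = sg (sg i 2) 1"
  by (simp add: var_def power2_eq_square mult_single single_add[symmetric] numeral_2_eq_2)

lemma mdeg_superset: "finite K \<Longrightarrow> ks m \<subseteq> K \<Longrightarrow> mdeg m = (\<Sum>i\<in>K. lk m i)"
  unfolding mdeg_def by (rule sum.mono_neutral_left) (auto simp: in_keys_iff)

lemma mdeg_add: "mdeg (a + b) = mdeg a + mdeg b"
proof -
  let ?K = "ks a \<union> ks b"
  have "mdeg (a+b) = (\<Sum>i\<in>?K. lk (a+b) i)"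
    by (rule mdeg_superset) (auto simp: keys_add_nat)
  also have "\<dots> = (\<Sum>i\<in>?K. lk a i) + (\<Sum>i\<in>?K. lk b i)"
    by (simp add: lookup_add sum.distrib)
  also have "\<dots> = mdeg a + mdeg b"
    by (simp add: mdeg_superset[symmetric])
  finally show ?thesis .
qed

lemma mdeg_single: "mdeg (sg i k) = k"
  by (simp add: mdeg_def)

lemma mdeg_zero: "mdeg 0 = 0"
  by (simp add: mdeg_def)

lemma mdeg_sqfree: "(\<forall>i. lk m i \<le> 1) \<Longrightarrow> mdeg m = card (ks m)"
proof -
  assume a: "\<forall>i. lk m i \<le> 1"
  have "\<forall>i\<in>ks m. lk m i = 1" using a by (auto simp: in_keys_iff) (metis le_antisym Suc_leI)
  then show ?thesis unfolding mdeg_def by simp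
qed

lemma mdeg_ind: "finite \<tau> \<Longrightarrow> mdeg (ind \<tau>) = card \<tau>"
  by (subst mdeg_sqfree) (auto simp: lookup_ind keys_ind)

lemma mdeg1: "mdeg m = 1 \<Longrightarrow> \<exists>i. m = sg i 1"
proof -
  assume a: "mdeg m = 1"
  then have "ks m \<noteq> {}" by (auto simp: mdeg_def)
  then obtain i where i: "i \<in> ks m" by blast
  have f: "finite (ks m)" by simp
  have "lk m i + (\<Sum>j\<in>ks m - {i}. lk m j) = 1"
    using a unfolding mdeg_def by (simp add: sum.remove[OF f i])
  moreover have "lk m i \<ge> 1" using i by (simp add: in_keys_iff)
  ultimately have "lk m i = 1" and "(\<Sum>j\<in>ks m - {i}. lk m j) = 0" by linarith+
  then have "\<forall>j\<in>ks m - {i}. lk m j = 0" by simp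
  then have "\<forall>j. j \<noteq> i \<longrightarrow> lk m j = 0" by (auto simp: in_keys_iff)
  then have "m = sg i 1"
    by (intro poly_mapping_eqI) (auto simp: lookup_single when_def \<open>lk m i = 1\<close>)
  then show ?thesis by blast
qed

lemma polyring_add: "p \<in> polyring N \<Longrightarrow> q \<in> polyring N \<Longrightarrow> p + q \<in> polyring N"
proof -
  assume p: "p \<in> polyring N" and q: "q \<in> polyring N"
  have "ks (p + q) \<subseteq> ks p \<union> ks q" by (rule keys_add)
  then show ?thesis using p q unfolding polyring_def by blast
qed

lemma polyring_mult: "p \<in> polyring N \<Longrightarrow> q \<in> polyring N \<Longrightarrow> p * q \<in> polyring N"
proof -
  assume p: "p \<in> polyring N" and q: "q \<in> polyring N"
  { fix m assume "m \<in> ks (p * q)"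
    then obtain a b where "m = a + b" "a \<in> ks p" "b \<in> ks q" using keys_mult[of p q] by blast
    then have "ks m \<subseteq> {1..N}" using p q unfolding polyring_def by (simp add: keys_add_nat)
  }
  then show ?thesis unfolding polyring_def by blast
qed

lemma keys_uminus': "ks (- (p::'k::comm_ring_1 mpoly)) = ks p"
  by (auto simp: in_keys_iff)

lemma polyring_uminus: "p \<in> polyring N \<Longrightarrow> - p \<in> polyring N"
  unfolding polyring_def mem_Collect_eq keys_uminus' by assumption

lemma polyring_diff: "p \<in> polyring N \<Longrightarrow> q \<in> polyring N \<Longrightarrow> p - q \<in> polyring N"
  unfolding diff_conv_add_uminus by (intro polyring_add polyring_uminus)

lemma polyring_single: "ks m \<subseteq> {1..N} \<Longrightarrow> sg m c \<in> polyring N"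
  unfolding polyring_def by simp

lemma polyring_const: "sg 0 c \<in> polyring N"
  by (rule polyring_single) simp

lemma polyring_zero: "0 \<in> polyring N"
  unfolding polyring_def by simp

lemma polyring_one: "1 \<in> polyring N"
  unfolding polyring_def by simp

lemma polyring_var: "i \<in> {1..N} \<Longrightarrow> var i \<in> polyring N"
  unfolding var_def by (rule polyring_single) simp

lemma polyring_pow: "p \<in> polyring N \<Longrightarrow> p ^ r \<in> polyring N"
proof (induction r)
  case 0
  then show ?case by (simp add: polyring_one)
next
  case (Suc r)
  then show ?case unfolding power_Suc by (intro polyring_mult)
qed

lemma polyring_sum: "(\<And>x. x \<in> A \<Longrightarrow> f x \<in> polyring N) \<Longrightarrow> sum f A \<in> polyring N"
proof (induction A rule: infinite_finite_induct)
  case (infinite A)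
  then show ?case by (simp add: polyring_zero)
next
  case empty
  then show ?case by (simp add: polyring_zero)
next
  case (insert x F)
  then show ?case by (simp add: polyring_add)
qed

lemma polyring_of_nat: "(of_nat r :: 'k::comm_ring_1 mpoly) \<in> polyring N"
proof (induction r)
  case 0
  then show ?case by (simp add: polyring_zero)
next
  case (Suc r)
  then show ?case unfolding of_nat_Suc by (intro polyring_add polyring_one)
qed

lemma homog_mult: "homog a p \<Longrightarrow> homog b q \<Longrightarrow> homog (a + b) (p * q)"
proof -
  assume p: "homog a p" and q: "homog b q"
  { fix m assume "m \<in> ks (p * q)"
    then obtain x y where "m = x + y" "x \<in> ks p" "y \<in> ks q" using keys_mult[of p q] by blast
    then have "mdeg m = a + b" using p q unfolding homog_def by (simp add: mdeg_add)
  }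
  then show ?thesis unfolding homog_def by blast
qed

lemma homog_add: "homog a p \<Longrightarrow> homog a q \<Longrightarrow> homog a (p + q)"
proof -
  assume p: "homog a p" and q: "homog a q"
  have "ks (p + q) \<subseteq> ks p \<union> ks q" by (rule keys_add)
  then show ?thesis using p q unfolding homog_def by blast
qed

lemma homog_uminus: "homog a p \<Longrightarrow> homog a (- p)"
  unfolding homog_def keys_uminus' by assumption

lemma homog_diff: "homog a p \<Longrightarrow> homog a q \<Longrightarrow> homog a (p - q)"
  unfolding diff_conv_add_uminus by (intro homog_add homog_uminus)

lemma homog_single: "mdeg m = a \<Longrightarrow> homog a (sg m c)"
  unfolding homog_def by simp

lemma homog_var: "homog 1 (var i)"
  unfolding var_def by (rule homog_single) (simp add: mdeg_single)

lemma homog_zero: "homog a 0"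
  unfolding homog_def by simp

lemma homog_sum: "(\<And>x. x \<in> A \<Longrightarrow> homog a (f x)) \<Longrightarrow> homog a (sum f A)"
proof (induction A rule: infinite_finite_induct)
  case (infinite A)
  then show ?case by (simp add: homog_zero)
next
  case empty
  then show ?case by (simp add: homog_zero)
next
  case (insert x F)
  then show ?case by (simp add: homog_add)
qed

lemma poly_expand: "p = (\<Sum>m\<in>ks p. sg m (lk p m))"
  by (rule poly_mapping_eqI) (auto simp: lookup_sum lookup_single when_def in_keys_iff)



definition down :: "nat set set \<Rightarrow> bool" where
  "down \<Delta> \<longleftrightarrow> (\<forall>\<tau>\<in>\<Delta>. \<forall>\<sigma>. \<sigma> \<subseteq> \<tau> \<longrightarrow> \<sigma> \<in> \<Delta>)"

definition good :: "nat set set \<Rightarrow> (nat \<Rightarrow>\<^sub>0 nat) \<Rightarrow> bool" where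
  "good \<Delta> m \<longleftrightarrow> (\<forall>i. lk m i \<le> 1) \<and> ks m \<in> \<Delta>"

lemma good_mono: "down \<Delta> \<Longrightarrow> good \<Delta> (a + b) \<Longrightarrow> good \<Delta> b"
  unfolding good_def down_def
  by (metis (no_types, lifting) keys_add_nat le_add2 lookup_add order_trans sup_ge2)

lemma I_zero: "0 \<in> defining_ideal N \<Delta>"
  unfolding defining_ideal_def by (rule ideal_gen.zero)

lemma I_add: "a \<in> defining_ideal N \<Delta> \<Longrightarrow> b \<in> defining_ideal N \<Delta> \<Longrightarrow> a + b \<in> defining_ideal N \<Delta>"
  unfolding defining_ideal_def by (rule ideal_gen.add)

lemma I_mult: "a \<in> defining_ideal N \<Delta> \<Longrightarrow> r \<in> polyring N \<Longrightarrow> r * a \<in> defining_ideal N \<Delta>"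
  unfolding defining_ideal_def by (rule ideal_gen.mult)

lemma I_mult_right: "a \<in> defining_ideal N \<Delta> \<Longrightarrow> r \<in> polyring N \<Longrightarrow> a * r \<in> defining_ideal N \<Delta>"
  by (metis I_mult mult.commute)

lemma I_uminus: "a \<in> defining_ideal N \<Delta> \<Longrightarrow> - a \<in> defining_ideal N \<Delta>"
proof -
  assume a: "a \<in> defining_ideal N \<Delta>"
  have "(- 1) \<in> polyring N" by (intro polyring_uminus polyring_one)
  from I_mult[OF a this] show ?thesis by simp
qed

lemma I_diff: "a \<in> defining_ideal N \<Delta> \<Longrightarrow> b \<in> defining_ideal N \<Delta> \<Longrightarrow> a - b \<in> defining_ideal N \<Delta>"
  unfolding diff_conv_add_uminus by (intro I_add I_uminus)

lemma I_sum: "(\<And>x. x \<in> A \<Longrightarrow> f x \<in> defining_ideal N \<Delta>) \<Longrightarrow> sum f A \<in> defining_ideal N \<Delta>"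
proof (induction A rule: infinite_finite_induct)
  case (infinite A)
  then show ?case by (simp add: I_zero)
next
  case empty
  then show ?case by (simp add: I_zero)
next
  case (insert x F)
  then show ?case by (simp add: I_add)
qed

lemma I_xmon: "\<tau> \<subseteq> {1..N} \<Longrightarrow> \<tau> \<notin> \<Delta> \<Longrightarrow> xmon \<tau> \<in> defining_ideal N \<Delta>"
  unfolding defining_ideal_def by (rule ideal_gen.gen) blast

lemma I_sq: "i \<in> {1..N} \<Longrightarrow> var i ^ 2 \<in> defining_ideal N \<Delta>"
  unfolding defining_ideal_def by (rule ideal_gen.gen) blast

lemma I_easy_aux:
  assumes d: "down \<Delta>" and p: "p \<in> defining_ideal N \<Delta>"
  shows "\<forall>m\<in>ks p. \<not> good \<Delta> m"
  using p unfolding defining_ideal_def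
proof (induction rule: ideal_gen.induct)
  case zero
  then show ?case by simp
next
  case (gen g)
  then show ?case
  proof
    assume "g \<in> {xmon \<tau> |\<tau>. \<tau> \<subseteq> {1..N} \<and> \<tau> \<notin> \<Delta>}"
    then obtain \<tau> where t: "g = xmon \<tau>" "\<tau> \<subseteq> {1..N}" "\<tau> \<notin> \<Delta>" by blast
    then have f: "finite \<tau>" using finite_subset by blast
    have "g = sg (ind \<tau>) 1" using t f by (simp add: xmon_eq)
    then show ?thesis using t f by (simp add: good_def keys_ind)
  next
    assume "g \<in> {var i ^ 2 |i. i \<in> {1..N}}"
    then obtain i where "g = var i ^ 2" by blast
    then have "g = sg (sg i 2) 1" by (simp add: var_pow2)
    then show ?thesis by (auto simp: good_def intro!: exI[of _ i])
  qed
next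
  case (add a b)
  then show ?case using keys_add[of a b] by blast
next
  case (mult a r)
  show ?case
  proof
    fix m assume "m \<in> ks (r * a)"
    then obtain x y where "m = x + y" "y \<in> ks a" using keys_mult[of r a] by blast
    then show "\<not> good \<Delta> m" using mult.IH good_mono[OF d, of x y] by blast
  qed
qed

lemma I_easy: "down \<Delta> \<Longrightarrow> p \<in> defining_ideal N \<Delta> \<Longrightarrow> good \<Delta> m \<Longrightarrow> lk p m = 0"
  using I_easy_aux by (metis in_keys_iff)

lemma I_monomial:
  assumes k: "ks m \<subseteq> {1..N}" and ng: "\<not> good \<Delta> m"
  shows "sg m c \<in> defining_ideal N \<Delta>"
proof (cases "\<exists>i. lk m i \<ge> 2")
  case True
  then obtain i where i: "lk m i \<ge> 2" by blast
  then have "i \<in> ks m" by (simp add: in_keys_iff)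
  then have iN: "i \<in> {1..N}" using k by blast
  have me: "m = (m - sg i 2) + sg i 2"
    by (rule poly_mapping_eqI) (use i in \<open>auto simp: lookup_add lookup_minus_nat lookup_single when_def\<close>)
  have "sg m c = sg (m - sg i 2) c * var i ^ 2"
    by (subst me) (simp add: var_pow2 mult_single)
  moreover have "sg (m - sg i 2) c \<in> polyring N"
    by (rule polyring_single) (use k in \<open>auto simp: in_keys_iff lookup_minus_nat\<close>)
  ultimately show ?thesis by (metis I_mult I_sq iN)
next
  case False
  then have le: "\<forall>i. lk m i \<le> 1" by (metis not_less_eq_eq numeral_2_eq_2 One_nat_def)
  then have nd: "ks m \<notin> \<Delta>" using ng by (simp add: good_def)
  have me: "m = ind (ks m)"
    by (rule poly_mapping_eqI) (use le in \<open>auto simp: lookup_ind in_keys_iff intro: le_antisym\<close>)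
  have "sg m c = sg 0 c * xmon (ks m)"
    by (simp add: xmon_eq mult_single me[symmetric])
  then show ?thesis using I_mult[OF I_xmon[OF k nd] polyring_const] by simp
qed

lemma I_hard:
  assumes p: "p \<in> polyring N" and b: "\<forall>m\<in>ks p. \<not> good \<Delta> m"
  shows "p \<in> defining_ideal N \<Delta>"
proof -
  have "(\<Sum>m\<in>ks p. sg m (lk p m)) \<in> defining_ideal N \<Delta>"
    by (rule I_sum, rule I_monomial) (use p b in \<open>auto simp: polyring_def\<close>)
  then show ?thesis using poly_expand[of p] by simp
qed



definition facet :: "nat \<Rightarrow> nat set \<Rightarrow> nat set" where
  "facet n S = S \<union> (\<lambda>k. n + k) ` ({1..n} - S)"

lemma edgeE: "simple_graph {1..n} E \<Longrightarrow> e \<in> E \<Longrightarrow> e \<subseteq> {1..n}"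
  unfolding simple_graph_def by fastforce

lemma whisker_in: "k \<in> {1..n} \<Longrightarrow> {k, n + k} \<in> whisker_edges n E"
  unfolding whisker_edges_def by blast

lemma whisker_cases: "e \<in> whisker_edges n E \<Longrightarrow> e \<in> E \<or> (\<exists>j\<in>{1..n}. e = {j, n + j})"
  unfolding whisker_edges_def by blast

lemma upper_half: "(x::nat) \<in> {1..2*n} \<Longrightarrow> \<not> x \<le> n \<Longrightarrow> \<exists>k. x = n + k \<and> k \<in> {1..n}"
  by (intro exI[of _ "x - n"]) auto

lemma mvc_sub: "min_vertex_cover V W C \<Longrightarrow> C \<subseteq> V"
  unfolding min_vertex_cover_def vertex_cover_def by blast

lemma mvc_pair:
  assumes g: "simple_graph {1..n} E"
    and C: "min_vertex_cover {1..2*n} (whisker_edges n E) C"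
    and k: "k \<in> {1..n}"
  shows "k \<in> C \<longleftrightarrow> n + k \<notin> C"
proof -
  have vc: "vertex_cover {1..2*n} (whisker_edges n E) C"
    and mn: "\<And>D. D \<subset> C \<Longrightarrow> \<not> vertex_cover {1..2*n} (whisker_edges n E) D"
    using C unfolding min_vertex_cover_def by auto
  have "{k, n + k} \<inter> C \<noteq> {}" using vc whisker_in[OF k] unfolding vertex_cover_def by blast
  then have one: "k \<in> C \<or> n + k \<in> C" by blast
  have "\<not> (k \<in> C \<and> n + k \<in> C)"
  proof
    assume both: "k \<in> C \<and> n + k \<in> C"
    let ?D = "C - {n + k}"
    have "?D \<subset> C" using both by blast
    moreover have "vertex_cover {1..2*n} (whisker_edges n E) ?D"
      unfolding vertex_cover_def
    proof (intro conjI ballI)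
      show "?D \<subseteq> {1..2*n}" using vc unfolding vertex_cover_def by blast
    next
      fix e assume e: "e \<in> whisker_edges n E"
      have ec: "e \<inter> C \<noteq> {}" using vc e unfolding vertex_cover_def by blast
      from whisker_cases[OF e] show "e \<inter> ?D \<noteq> {}"
      proof
        assume "e \<in> E"
        then have "e \<subseteq> {1..n}" using edgeE[OF g] by blast
        then have "n + k \<notin> e" using k by auto
        then show ?thesis using ec by blast
      next
        assume "\<exists>j\<in>{1..n}. e = {j, n + j}"
        then obtain j where j: "j \<in> {1..n}" "e = {j, n + j}" by blast
        show ?thesis
        proof (cases "j = k")
          case True
          then show ?thesis using j both k by auto
        next
          case False
          then have "n + k \<notin> e" using j k by auto
          then show ?thesis using ec by blast
        qed
      qed
    qed
    ultimately show False using mn by blast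
  qed
  then show ?thesis using one by blast
qed

lemma mvc_card:
  assumes g: "simple_graph {1..n} E"
    and C: "min_vertex_cover {1..2*n} (whisker_edges n E) C"
  shows "card C = n"
proof -
  let ?f = "\<lambda>k. if k \<in> C then k else n + k"
  have sub: "C \<subseteq> {1..2*n}" using mvc_sub[OF C] .
  have "bij_betw ?f {1..n} C"
  proof (rule bij_betwI')
    fix x y assume "x \<in> {1..n}" "y \<in> {1..n}"
    then show "(?f x = ?f y) = (x = y)" by auto
  next
    fix x assume x: "x \<in> {1..n}"
    show "?f x \<in> C" using mvc_pair[OF g C x] by auto
  next
    fix y assume y: "y \<in> C"
    show "\<exists>x\<in>{1..n}. y = ?f x"
    proof (cases "y \<le> n")
      case True
      then have "y \<in> {1..n}" using y sub by auto
      then show ?thesis using y by (intro bexI[of _ y]) auto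
    next
      case False
      then obtain k where k: "y = n + k" "k \<in> {1..n}" using y sub upper_half by blast
      then have "k \<notin> C" using mvc_pair[OF g C k(2)] y by blast
      then show ?thesis using k by (intro bexI[of _ k]) auto
    qed
  qed
  then show ?thesis by (metis bij_betw_same_card card_atLeastAtMost diff_Suc_1)
qed

lemma facet_mvc:
  assumes g: "simple_graph {1..n} E" and S: "S \<subseteq> {1..n}" and cov: "\<forall>e\<in>E. e \<inter> S \<noteq> {}"
  shows "min_vertex_cover {1..2*n} (whisker_edges n E) (facet n S)"
  unfolding min_vertex_cover_def
proof (intro conjI allI impI)
  show "vertex_cover {1..2*n} (whisker_edges n E) (facet n S)"
    unfolding vertex_cover_def
  proof (intro conjI ballI)
    show "facet n S \<subseteq> {1..2*n}" using S unfolding facet_def by auto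
  next
    fix e assume e: "e \<in> whisker_edges n E"
    from whisker_cases[OF e] show "e \<inter> facet n S \<noteq> {}"
    proof
      assume "e \<in> E" then show ?thesis using cov unfolding facet_def by blast
    next
      assume "\<exists>j\<in>{1..n}. e = {j, n + j}"
      then obtain j where j: "j \<in> {1..n}" "e = {j, n + j}" by blast
      then show ?thesis unfolding facet_def by (cases "j \<in> S") auto
    qed
  qed
next
  fix D assume D: "D \<subset> facet n S"
  then obtain x where x: "x \<in> facet n S" "x \<notin> D" by blast
  show "\<not> vertex_cover {1..2*n} (whisker_edges n E) D"
  proof
    assume vc: "vertex_cover {1..2*n} (whisker_edges n E) D"
    show False
    proof (cases "x \<in> S")
      case True
      then have xn: "x \<in> {1..n}" using S by blast
      have "n + x \<notin> S" using S xn by auto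
      then have "n + x \<notin> facet n S" using True S unfolding facet_def by auto
      then have "{x, n + x} \<inter> D = {}" using x D by blast
      then show False using vc whisker_in[OF xn] unfolding vertex_cover_def by blast
    next
      case False
      then obtain k where k: "x = n + k" "k \<in> {1..n}" "k \<notin> S" using x unfolding facet_def by blast
      have "k \<notin> facet n S" using k S unfolding facet_def by auto
      then have "{k, n + k} \<inter> D = {}" using x D k by blast
      then show False using vc whisker_in[OF k(2)] unfolding vertex_cover_def by blast
    qed
  qed
qed

lemma facet_inter: "S \<subseteq> {1..n} \<Longrightarrow> facet n S \<inter> {1..n} = S"
  unfolding facet_def by auto

lemma gen_complex_down: "down (gen_complex Fs)"
  unfolding down_def gen_complex_def by blast

lemma face_props:
  assumes g: "simple_graph {1..n} E"
    and t: "\<tau> \<in> gen_complex (cover_ideal_supports {1..2*n} (whisker_edges n E))"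
  shows "finite \<tau> \<and> card \<tau> \<le> n \<and> \<tau> \<subseteq> {1..2*n}"
proof -
  obtain C where C: "min_vertex_cover {1..2*n} (whisker_edges n E) C" "\<tau> \<subseteq> C"
    using t unfolding gen_complex_def cover_ideal_supports_def by blast
  have "C \<subseteq> {1..2*n}" using mvc_sub[OF C(1)] .
  then have "finite C" using finite_subset by blast
  then show ?thesis using C mvc_card[OF g C(1)] mvc_sub[OF C(1)]
    by (meson card_mono finite_subset order_trans)
qed

lemma face_extend:
  assumes g: "simple_graph {1..n} E"
    and t: "\<tau> \<in> gen_complex (cover_ideal_supports {1..2*n} (whisker_edges n E))"
    and c: "card \<tau> < n"
  shows "\<exists>i\<in>{1..2*n} - \<tau>. insert i \<tau> \<in> gen_complex (cover_ideal_supports {1..2*n} (whisker_edges n E))"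
proof -
  obtain C where C: "min_vertex_cover {1..2*n} (whisker_edges n E) C" "\<tau> \<subseteq> C"
    using t unfolding gen_complex_def cover_ideal_supports_def by blast
  have fC: "finite C" using mvc_sub[OF C(1)] finite_subset by blast
  have "\<tau> \<noteq> C" using c mvc_card[OF g C(1)] by auto
  then obtain i where i: "i \<in> C" "i \<notin> \<tau>" using C(2) by blast
  then have "insert i \<tau> \<subseteq> C" using C(2) by blast
  then have "insert i \<tau> \<in> gen_complex (cover_ideal_supports {1..2*n} (whisker_edges n E))"
    using C(1) unfolding gen_complex_def cover_ideal_supports_def by blast
  moreover have "i \<in> {1..2*n}" using mvc_sub[OF C(1)] i by blast
  ultimately show ?thesis using i by blast
qed

lemma cover_all: "simple_graph {1..n} E \<Longrightarrow> \<forall>e\<in>E. e \<inter> {1..n} \<noteq> {}"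
  unfolding simple_graph_def by fastforce

lemma full_face:
  assumes g: "simple_graph {1..n} E"
  shows "{1..n} \<in> gen_complex (cover_ideal_supports {1..2*n} (whisker_edges n E))"
proof -
  have "min_vertex_cover {1..2*n} (whisker_edges n E) (facet n {1..n})"
    by (rule facet_mvc[OF g]) (use cover_all[OF g] in auto)
  moreover have "facet n {1..n} = {1..n}" unfolding facet_def by simp
  ultimately show ?thesis unfolding gen_complex_def cover_ideal_supports_def by auto
qed

lemma single_face:
  assumes g: "simple_graph {1..n} E" and i: "i \<in> {1..2*n}"
  shows "{i} \<in> gen_complex (cover_ideal_supports {1..2*n} (whisker_edges n E))"
proof (cases "i \<le> n")
  case True
  then have "{i} \<subseteq> {1..n}" using i by auto
  then show ?thesis using full_face[OF g] unfolding gen_complex_def by blast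
next
  case False
  then obtain k where k: "i = n + k" "k \<in> {1..n}" using i upper_half by blast
  have cov: "\<forall>e\<in>E. e \<inter> ({1..n} - {k}) \<noteq> {}"
  proof
    fix e assume e: "e \<in> E"
    then obtain a b where ab: "e = {a, b}" "a \<noteq> b" "a \<in> {1..n}" "b \<in> {1..n}"
      using g unfolding simple_graph_def by blast
    then show "e \<inter> ({1..n} - {k}) \<noteq> {}" by (cases "a = k") auto
  qed
  have "min_vertex_cover {1..2*n} (whisker_edges n E) (facet n ({1..n} - {k}))"
    by (rule facet_mvc[OF g _ cov]) auto
  moreover have "{i} \<subseteq> facet n ({1..n} - {k})" using k unfolding facet_def by auto
  ultimately show ?thesis unfolding gen_complex_def cover_ideal_supports_def by blast
qed

lemma pair_nonface:
  assumes g: "simple_graph {1..n} E" and k: "k \<in> {1..n}"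
  shows "{k, n + k} \<notin> gen_complex (cover_ideal_supports {1..2*n} (whisker_edges n E))"
proof
  assume "{k, n + k} \<in> gen_complex (cover_ideal_supports {1..2*n} (whisker_edges n E))"
  then obtain C where C: "min_vertex_cover {1..2*n} (whisker_edges n E) C" "{k, n+k} \<subseteq> C"
    unfolding gen_complex_def cover_ideal_supports_def by blast
  then show False using mvc_pair[OF g C(1) k] by blast
qed



lemma pow_lin0: "(a::nat) + 1 \<le> 2 ^ a"
proof (induction a)
  case 0 then show ?case by simp
next
  case (Suc a)
  have "1 \<le> (2::nat) ^ a" by simp
  then show ?case using Suc by simp
qed

lemma pow_lin1: "2 * (a::nat) \<le> 2 ^ a"
proof (cases a)
  case 0 then show ?thesis by simp
next
  case (Suc b)
  then show ?thesis using pow_lin0[of b] by simp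
qed

lemma pow_lin2: "3 \<le> (a::nat) \<Longrightarrow> 2 * a + 2 \<le> 2 ^ a"
proof (induction a rule: nat_induct_at_least)
  case base then show ?case by simp
next
  case (Suc a) then show ?case by simp
qed

lemma pow_sum: "5 \<le> (a::nat) + b \<Longrightarrow> 2 * (a + b) + 2 \<le> 2 ^ a + 2 ^ b"
proof (cases "3 \<le> a")
  case True
  then show ?thesis using pow_lin2[of a] pow_lin1[of b] by simp
next
  case False
  assume "5 \<le> a + b"
  then have "3 \<le> b" using False by simp
  then show ?thesis using pow_lin2[of b] pow_lin1[of a] by simp
qed

lemma count_facets:
  assumes g: "simple_graph {1..n} E" and bip: "bipartite {1..n} E" and n5: "n \<ge> 5"
  shows "finite (cover_ideal_supports {1..2*n} (whisker_edges n E))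
    \<and> 2 * n + 1 \<le> card (cover_ideal_supports {1..2*n} (whisker_edges n E))"
proof -
  let ?F = "cover_ideal_supports {1..2*n} (whisker_edges n E)"
  have finF: "finite ?F"
  proof (rule finite_subset)
    show "?F \<subseteq> Pow {1..2*n}" unfolding cover_ideal_supports_def using mvc_sub by blast
  qed simp
  obtain A where A: "A \<subseteq> {1..n}" "\<forall>e\<in>E. card (e \<inter> A) = 1"
    using bip unfolding bipartite_def by blast
  define B where "B = {1..n} - A"
  have AB: "A \<inter> B = {}" "A \<union> B = {1..n}" using A(1) unfolding B_def by auto
  have finA: "finite A" using finite_subset[OF A(1)] by simp
  have finB: "finite B" unfolding B_def by simp
  have cardAB: "card A + card B = n"
    using card_Un_disjoint[OF finA finB AB(1)] AB(2) by simp
  have covA: "\<forall>e\<in>E. e \<inter> A \<noteq> {}"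
  proof
    fix e assume e: "e \<in> E"
    show "e \<inter> A \<noteq> {}"
    proof
      assume "e \<inter> A = {}"
      then have "card (e \<inter> A) = 0" by simp
      then show False using A(2) e by simp
    qed
  qed
  have covB: "\<forall>e\<in>E. e \<inter> B \<noteq> {}"
  proof
    fix e assume e: "e \<in> E"
    then obtain a b where ab: "e = {a, b}" "a \<noteq> b" "a \<in> {1..n}" "b \<in> {1..n}"
      using g unfolding simple_graph_def by blast
    show "e \<inter> B \<noteq> {}"
    proof
      assume "e \<inter> B = {}"
      then have "a \<in> A" "b \<in> A" using ab unfolding B_def by auto
      then have "e \<inter> A = {a, b}" using ab by auto
      then have "card (e \<inter> A) = 2" using ab by simp
      then show False using A(2) e by simp
    qed
  qed
  define G1 where "G1 = (\<lambda>X. A \<union> X) ` Pow B"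
  define G2 where "G2 = (\<lambda>Y. B \<union> Y) ` (Pow A - {A})"
  have inj1: "inj_on (\<lambda>X. A \<union> X) (Pow B)"
    by (rule inj_onI) (use AB in blast)
  have inj2: "inj_on (\<lambda>Y. B \<union> Y) (Pow A - {A})"
    by (rule inj_onI) (use AB in blast)
  have c1: "card G1 = 2 ^ card B"
    unfolding G1_def using card_image[OF inj1] card_Pow[OF finB] by simp
  have c2: "card G2 = 2 ^ card A - 1"
  proof -
    have "card (Pow A - {A}) = 2 ^ card A - 1"
      using card_Diff_singleton[of A "Pow A"] finA card_Pow[OF finA] by simp
    then show ?thesis unfolding G2_def using card_image[OF inj2] by simp
  qed
  have disj: "G1 \<inter> G2 = {}"
  proof (rule ccontr)
    assume "G1 \<inter> G2 \<noteq> {}"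
    then obtain X Y where XY: "X \<subseteq> B" "Y \<subseteq> A" "Y \<noteq> A" "A \<union> X = B \<union> Y"
      unfolding G1_def G2_def by blast
    then have "A \<subseteq> Y" using AB by blast
    then show False using XY by blast
  qed
  have finG: "finite G1" "finite G2" unfolding G1_def G2_def using finA finB by auto
  have cU: "card (G1 \<union> G2) = card G1 + card G2" by (rule card_Un_disjoint[OF finG disj])
  have one: "1 \<le> (2::nat) ^ card A" by simp
  have cG: "card (G1 \<union> G2) = 2 ^ card B + 2 ^ card A - 1"
    using cU c1 c2 one by linarith
  have subn1: "\<forall>S\<in>G1. S \<subseteq> {1..n} \<and> (\<forall>e\<in>E. e \<inter> S \<noteq> {})"
  proof
    fix S assume "S \<in> G1"
    then obtain X where X: "X \<subseteq> B" "S = A \<union> X" unfolding G1_def by blast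
    show "S \<subseteq> {1..n} \<and> (\<forall>e\<in>E. e \<inter> S \<noteq> {})"
    proof
      show "S \<subseteq> {1..n}" using X AB(2) by blast
      show "\<forall>e\<in>E. e \<inter> S \<noteq> {}" using covA X(2) by blast
    qed
  qed
  have subn2: "\<forall>S\<in>G2. S \<subseteq> {1..n} \<and> (\<forall>e\<in>E. e \<inter> S \<noteq> {})"
  proof
    fix S assume "S \<in> G2"
    then obtain X where X: "X \<subseteq> A" "S = B \<union> X" unfolding G2_def by blast
    show "S \<subseteq> {1..n} \<and> (\<forall>e\<in>E. e \<inter> S \<noteq> {})"
    proof
      show "S \<subseteq> {1..n}" using X AB(2) by blast
      show "\<forall>e\<in>E. e \<inter> S \<noteq> {}" using covB X(2) by blast
    qed
  qed
  have subn: "\<forall>S\<in>G1 \<union> G2. S \<subseteq> {1..n} \<and> (\<forall>e\<in>E. e \<inter> S \<noteq> {})"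
    using subn1 subn2 by blast
  have injf: "inj_on (facet n) (G1 \<union> G2)"
  proof (rule inj_onI)
    fix S T assume "S \<in> G1 \<union> G2" "T \<in> G1 \<union> G2" "facet n S = facet n T"
    then show "S = T" using subn facet_inter[of S n] facet_inter[of T n] by simp
  qed
  have "facet n ` (G1 \<union> G2) \<subseteq> ?F"
  proof
    fix C assume "C \<in> facet n ` (G1 \<union> G2)"
    then obtain S where S: "S \<in> G1 \<union> G2" "C = facet n S" by blast
    have "min_vertex_cover {1..2*n} (whisker_edges n E) (facet n S)"
      using facet_mvc[OF g] subn S(1) by simp
    then show "C \<in> ?F" unfolding cover_ideal_supports_def using S(2) by simp
  qed
  then have "card (facet n ` (G1 \<union> G2)) \<le> card ?F" by (rule card_mono[OF finF])
  then have "card (G1 \<union> G2) \<le> card ?F" using card_image[OF injf] by simp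
  moreover have "2 * n + 2 \<le> 2 ^ card B + 2 ^ card A"
    using pow_sum[of "card A" "card B"] cardAB n5 by simp
  ultimately show ?thesis using finF cG by linarith
qed



lemma good_card:
  assumes g: "simple_graph {1..n} E"
    and D: "\<Delta> = gen_complex (cover_ideal_supports {1..2*n} (whisker_edges n E))"
    and gm: "good \<Delta> m"
  shows "mdeg m = card (ks m) \<and> card (ks m) \<le> n"
proof -
  have "\<forall>i. lk m i \<le> 1" "ks m \<in> \<Delta>" using gm unfolding good_def by auto
  then show ?thesis using face_props[OF g, of "ks m"] D mdeg_sqfree by auto
qed

lemma lookup_var_mult: "lk (var i * f) (sg i 1 + m) = lk (f :: 'k::comm_ring_1 mpoly) m"
  unfolding var_def using lookup_single_mult_shift[of "sg i 1" 1 f m] by simp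

lemma level_part:
  assumes g: "simple_graph {1..n} E"
    and D: "\<Delta> = gen_complex (cover_ideal_supports {1..2*n} (whisker_edges n E))"
  shows "level_quot (2*n) (defining_ideal (2*n) \<Delta> :: 'k::comm_ring_1 mpoly set)"
proof -
  let ?I = "defining_ideal (2*n) \<Delta> :: 'k mpoly set"
  have dn: "down \<Delta>" using D gen_complex_down by simp
  have ex: "\<exists>g\<in>polyring (2*n). homog n g \<and> g \<notin> ?I"
  proof (intro bexI conjI)
    let ?g = "xmon {1..n} :: 'k mpoly"
    have ge: "?g = sg (ind {1..n}) 1" by (simp add: xmon_eq)
    show "?g \<in> polyring (2*n)" unfolding ge by (rule polyring_single) (auto simp: keys_ind)
    show "homog n ?g" unfolding ge by (rule homog_single) (simp add: mdeg_ind)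
    have gd: "good \<Delta> (ind {1..n})"
      unfolding good_def using full_face[OF g] D by (simp add: lookup_ind keys_ind)
    show "?g \<notin> ?I"
    proof
      assume "?g \<in> ?I"
      from I_easy[OF dn this gd] show False unfolding ge by simp
    qed
  qed
  have high: "\<And>e g. e > n \<Longrightarrow> g \<in> polyring (2*n) \<Longrightarrow> homog e g \<Longrightarrow> g \<in> ?I"
  proof -
    fix e and g :: "'k mpoly" assume e: "e > n" and gp: "g \<in> polyring (2*n)" and h: "homog e g"
    show "g \<in> ?I"
    proof (rule I_hard[OF gp], intro ballI notI)
      fix m assume m: "m \<in> ks g" and gm: "good \<Delta> m"
      have "mdeg m = e" using h m unfolding homog_def by blast
      then show False using good_card[OF g D gm] e by simp
    qed
  qed
  have soc: "\<forall>f\<in>polyring (2*n). (\<forall>i\<in>{1..2*n}. var i * f \<in> ?I) \<longleftrightarrow>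
                       (\<exists>g\<in>polyring (2*n). homog n g \<and> f - g \<in> ?I)"
  proof (rule ballI, rule iffI)
    fix f :: "'k mpoly" assume fp: "f \<in> polyring (2*n)"
    assume vf: "\<forall>i\<in>{1..2*n}. var i * f \<in> ?I"
    let ?M = "{m \<in> ks f. mdeg m = n}"
    define g where "g = (\<Sum>m\<in>?M. sg m (lk f m))"
    have lg: "lk g m = (if mdeg m = n then lk f m else 0)" for m
      unfolding g_def by (auto simp: lookup_sum lookup_single when_def in_keys_iff)
    show "\<exists>g\<in>polyring (2*n). homog n g \<and> f - g \<in> ?I"
    proof (intro bexI conjI)
      show gp: "g \<in> polyring (2*n)" unfolding g_def
        by (rule polyring_sum, rule polyring_single) (use fp in \<open>auto simp: polyring_def\<close>)
      show "homog n g" unfolding g_def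
        by (rule homog_sum, rule homog_single) simp
      show "f - g \<in> ?I"
      proof (rule I_hard[OF polyring_diff[OF fp gp]], intro ballI notI)
        fix m assume m: "m \<in> ks (f - g)" and gm: "good \<Delta> m"
        have lm: "lk (f - g) m = (if mdeg m = n then 0 else lk f m)"
          by (simp add: lookup_minus lg)
        then have mn: "mdeg m \<noteq> n" and fm: "lk f m \<noteq> 0" using m by (auto simp: in_keys_iff split: if_splits)
        have cm: "card (ks m) < n" using good_card[OF g D gm] mn by simp
        have km: "ks m \<in> gen_complex (cover_ideal_supports {1..2*n} (whisker_edges n E))"
          using gm D unfolding good_def by simp
        obtain i where i: "i \<in> {1..2*n} - ks m"
          "insert i (ks m) \<in> gen_complex (cover_ideal_supports {1..2*n} (whisker_edges n E))"
          using face_extend[OF g km cm] by blast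
        let ?m' = "sg i 1 + m"
        have lmi: "lk m i = 0" using i(1) by (simp add: in_keys_iff)
        have gm': "good \<Delta> ?m'"
          unfolding good_def
        proof
          show "\<forall>j. lk ?m' j \<le> 1"
            using gm lmi unfolding good_def by (auto simp: lookup_add lookup_single when_def)
          show "ks ?m' \<in> \<Delta>" using i(2) D by (simp add: keys_add_nat)
        qed
        have "var i * f \<in> ?I" using vf i(1) by blast
        from I_easy[OF dn this gm'] have "lk (var i * f) ?m' = 0" .
        then show False using fm lookup_var_mult[of i f m] by simp
      qed
    qed
  next
    fix f :: "'k mpoly" assume fp: "f \<in> polyring (2*n)"
    assume "\<exists>g\<in>polyring (2*n). homog n g \<and> f - g \<in> ?I"
    then obtain g where gp: "g \<in> polyring (2*n)" "homog n g" "f - g \<in> ?I" by blast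
    show "\<forall>i\<in>{1..2*n}. var i * f \<in> ?I"
    proof
      fix i assume i: "i \<in> {1..2*n}"
      have "var i * f = var i * g + var i * (f - g)" by (simp add: algebra_simps)
      moreover have "var i * g \<in> ?I"
      proof (rule high[of "1 + n"])
        show "var i * g \<in> polyring (2*n)" by (intro polyring_mult polyring_var i gp(1))
        show "homog (1 + n) (var i * g)" by (rule homog_mult[OF homog_var gp(2)])
      qed simp
      moreover have "var i * (f - g) \<in> ?I" by (rule I_mult[OF gp(3) polyring_var[OF i]])
      ultimately show "var i * f \<in> ?I" by (simp add: I_add)
    qed
  qed
  show ?thesis unfolding level_quot_def
    by (intro exI[of _ n] conjI ex allI impI ballI high soc[rule_format]) auto
qed



lemma id1: "(l::'a::comm_ring) * ((l + X) * P) - l * (X * Q) = (l + X) * (l * P - l * Q) + Q * (l * l)"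
  by (simp add: algebra_simps)

lemma id2: "((l::'a::comm_ring_1) + X) * P - X * Q - (1 + c) * l * Q
     = (l + X) * (P - Q - c * l * R) + (c * R) * (l * l)" if "Q = X * R" for l X P Q R c
  using that by (simp add: algebra_simps)

lemma id3: "(Y::'a::comm_ring) = (Y - W - c * l * Z) + W + (c * l) * Z"
  by (simp add: algebra_simps)

lemma cL1:
  assumes l: "l \<in> polyring N" and X: "X \<in> polyring N" and ll: "l * l \<in> defining_ideal N \<Delta>"
  shows "l * (l + X) ^ r - l * X ^ r \<in> defining_ideal N \<Delta>"
proof (induction r)
  case 0
  then show ?case by (simp add: I_zero)
next
  case (Suc r)
  have eq: "l * (l + X) ^ Suc r - l * X ^ Suc r = (l + X) * (l * (l + X) ^ r - l * X ^ r) + X ^ r * (l * l)"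
    unfolding power_Suc by (rule id1)
  show ?case unfolding eq
    by (intro I_add I_mult Suc ll polyring_add polyring_pow l X)
qed

lemma cL2:
  assumes l: "l \<in> polyring N" and X: "X \<in> polyring N" and ll: "l * l \<in> defining_ideal N \<Delta>"
  shows "(l + X) ^ Suc r - X ^ Suc r - of_nat (Suc r) * l * X ^ r \<in> defining_ideal N \<Delta>"
proof (induction r)
  case 0
  then show ?case by (simp add: I_zero)
next
  case (Suc r)
  have eq: "(l + X) ^ Suc (Suc r) - X ^ Suc (Suc r) - of_nat (Suc (Suc r)) * l * X ^ Suc r
     = (l + X) * ((l + X) ^ Suc r - X ^ Suc r - of_nat (Suc r) * l * X ^ r) + (of_nat (Suc r) * X ^ r) * (l * l)"
    unfolding of_nat_Suc[of "Suc r"] power_Suc[of "l + X" "Suc r"] power_Suc[of X "Suc r"]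
    by (rule id2) simp
  show ?case unfolding eq
    by (intro I_add I_mult Suc ll polyring_add polyring_mult polyring_of_nat polyring_pow l X)
qed

lemma cL3:
  assumes fin: "finite S"
    and h: "\<forall>k\<in>S. l k \<in> polyring N \<and> l k * l k \<in> defining_ideal N \<Delta>"
  shows "(\<Sum>k\<in>S. l k) ^ Suc (card S) \<in> defining_ideal N \<Delta>"
  using fin h
proof (induction S rule: finite_induct)
  case empty
  then show ?case by (simp add: I_zero)
next
  case (insert k S)
  let ?M = "\<Sum>k\<in>S. l k"
  have lk: "l k \<in> polyring N" "l k * l k \<in> defining_ideal N \<Delta>" using insert by auto
  have M: "?M \<in> polyring N" using insert by (intro polyring_sum) auto
  have IH: "?M ^ Suc (card S) \<in> defining_ideal N \<Delta>" using insert by auto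
  have c: "card (insert k S) = Suc (card S)" using insert by simp
  have s: "(\<Sum>k\<in>insert k S. l k) = l k + ?M" using insert by simp
  have eq: "(l k + ?M) ^ Suc (Suc (card S)) =
     ((l k + ?M) ^ Suc (Suc (card S)) - ?M ^ Suc (Suc (card S)) - of_nat (Suc (Suc (card S))) * l k * ?M ^ Suc (card S))
     + ?M ^ Suc (Suc (card S)) + (of_nat (Suc (Suc (card S))) * l k) * ?M ^ Suc (card S)"
    by (rule id3)
  have W: "?M ^ Suc (Suc (card S)) \<in> defining_ideal N \<Delta>"
    unfolding power_Suc[of ?M "Suc (card S)"] by (intro I_mult IH M)
  show ?case unfolding c s
    by (subst eq) (intro I_add I_mult cL2 lk M IH W polyring_mult polyring_of_nat)
qed



lemma id4: "((a::'a::comm_ring) - b) * Ls = (a * Ls - a * Pa) - (b * Ls - b * Pb) + a * (Pa - Rs - c * b * Rr)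
   - b * (Pb - Rs - c * a * Rr) + a * Rs - b * Rs"
  by (simp add: algebra_simps)

lemma kernel:
  assumes fin: "finite K" and k: "k \<in> K" and m: "m \<in> K" and km: "k \<noteq> m"
    and cK: "card K = Suc (Suc r)"
    and h: "\<forall>j\<in>K. l j \<in> polyring N \<and> l j * l j \<in> defining_ideal N \<Delta>"
  shows "(l k - l m) * (\<Sum>j\<in>K. l j) ^ Suc r \<in> defining_ideal N \<Delta>"
proof -
  let ?I = "defining_ideal N \<Delta>"
  let ?R = "\<Sum>j\<in>K - {k, m}. l j"
  have finR: "finite (K - {k, m})" using fin by simp
  have cR: "card (K - {k, m}) = r"
    using cK k m km fin by (simp add: card_Diff_subset)
  have sumK: "(\<Sum>j\<in>K. l j) = l k + (l m + ?R)"
  proof -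
    have "(\<Sum>j\<in>K. l j) = l k + (\<Sum>j\<in>K - {k}. l j)" using fin k by (simp add: sum.remove)
    moreover have "(\<Sum>j\<in>K - {k}. l j) = l m + (\<Sum>j\<in>K - {k} - {m}. l j)"
      using fin m km by (intro sum.remove) auto
    moreover have "K - {k} - {m} = K - {k, m}" by blast
    ultimately show ?thesis by simp
  qed
  have sumK2: "(\<Sum>j\<in>K. l j) = l m + (l k + ?R)" unfolding sumK by (simp add: algebra_simps)
  have lk: "l k \<in> polyring N" "l k * l k \<in> ?I" and lm: "l m \<in> polyring N" "l m * l m \<in> ?I"
    using h k m by auto
  have R: "?R \<in> polyring N" using h by (intro polyring_sum) auto
  have A: "l k * (\<Sum>j\<in>K. l j) ^ Suc r - l k * (l m + ?R) ^ Suc r \<in> ?I"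
    unfolding sumK by (rule cL1[OF lk(1) polyring_add[OF lm(1) R] lk(2)])
  have B: "l m * (\<Sum>j\<in>K. l j) ^ Suc r - l m * (l k + ?R) ^ Suc r \<in> ?I"
    unfolding sumK2 by (rule cL1[OF lm(1) polyring_add[OF lk(1) R] lm(2)])
  have C: "(l m + ?R) ^ Suc r - ?R ^ Suc r - of_nat (Suc r) * l m * ?R ^ r \<in> ?I"
    by (rule cL2[OF lm(1) R lm(2)])
  have D: "(l k + ?R) ^ Suc r - ?R ^ Suc r - of_nat (Suc r) * l k * ?R ^ r \<in> ?I"
    by (rule cL2[OF lk(1) R lk(2)])
  have E: "?R ^ Suc r \<in> ?I"
    using cL3[OF finR, of l N \<Delta>] h cR by auto
  show ?thesis
    by (subst id4[where Pa = "(l m + ?R) ^ Suc r" and Pb = "(l k + ?R) ^ Suc r" and Rs = "?R ^ Suc r"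
          and c = "of_nat (Suc r)" and Rr = "?R ^ r"])
       (intro I_add I_diff I_mult A B C D E lk(1) lm(1))
qed



lemma sg_inj: "sg i (1::nat) = sg j 1 \<longleftrightarrow> i = j"
  by (metis lookup_single_eq lookup_single_not_eq one_neq_zero)

lemma sg_inj': "sg i (Suc 0) = sg j (Suc 0) \<longleftrightarrow> i = j"
  using sg_inj by simp

lemma lin_expand:
  fixes L :: "'k::comm_ring_1 mpoly"
  assumes Lp: "L \<in> polyring N" and Lh: "homog 1 L"
  shows "L = (\<Sum>i\<in>{1..N}. sg (sg i 1) (lk L (sg i 1)))"
proof (rule poly_mapping_eqI)
  fix m :: "nat \<Rightarrow>\<^sub>0 nat"
  have rhs: "lk (\<Sum>i\<in>{1..N}. sg (sg i 1) (lk L (sg i 1))) m = (\<Sum>i\<in>{1..N}. if sg i 1 = m then lk L (sg i 1) else 0)"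
    by (simp only: lookup_sum lookup_single when_def)
  show "lk L m = lk (\<Sum>i\<in>{1..N}. sg (sg i 1) (lk L (sg i 1))) m"
  proof (cases "\<exists>j\<in>{1..N}. m = sg j 1")
    case True
    then obtain j where j: "j \<in> {1..N}" "m = sg j 1" by blast
    have "(\<Sum>i\<in>{1..N}. if sg i 1 = m then lk L (sg i 1) else 0) = (\<Sum>i\<in>{1..N}. if i = j then lk L (sg j 1) else 0)"
      by (rule sum.cong) (auto simp: j(2) sg_inj sg_inj')
    also have "\<dots> = lk L m" using j by simp
    finally show ?thesis using rhs by simp
  next
    case False
    have z: "(\<Sum>i\<in>{1..N}. if sg i 1 = m then lk L (sg i 1) else 0) = 0"
      by (rule sum.neutral) (use False in auto)
    have "lk L m = 0"
    proof (rule ccontr)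
      assume "lk L m \<noteq> 0"
      then have mk: "m \<in> ks L" by (simp add: in_keys_iff)
      then have "mdeg m = 1" using Lh unfolding homog_def by blast
      then obtain j where mj: "m = sg j 1" using mdeg1 by blast
      have "ks m \<subseteq> {1..N}" using Lp mk unfolding polyring_def by blast
      then have "j \<in> {1..N}" using mj by simp
      then show False using False mj by blast
    qed
    then show ?thesis using rhs z by simp
  qed
qed

lemma split_2n: "{1..2*n} = {1..n} \<union> (\<lambda>k. n + k) ` {1..(n::nat)}"
proof
  show "{1..2*n} \<subseteq> {1..n} \<union> (\<lambda>k. n + k) ` {1..n}"
  proof
    fix x assume x: "x \<in> {1..2*n}"
    show "x \<in> {1..n} \<union> (\<lambda>k. n + k) ` {1..n}"
    proof (cases "x \<le> n")
      case True then show ?thesis using x by auto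
    next
      case False then show ?thesis using upper_half[OF x] by blast
    qed
  qed
qed auto

lemma sum_2n: "(\<Sum>i\<in>{1..2*n}. t i) = (\<Sum>k\<in>{1..(n::nat)}. t k + t (n + k))"
proof -
  have d: "{1..n} \<inter> (\<lambda>k. n + k) ` {1..n} = {}" by auto
  have "(\<Sum>i\<in>{1..2*n}. t i) = (\<Sum>i\<in>{1..n}. t i) + (\<Sum>i\<in>(\<lambda>k. n + k) ` {1..n}. t i)"
    unfolding split_2n by (rule sum.union_disjoint) (use d in auto)
  also have "(\<Sum>i\<in>(\<lambda>k. n + k) ` {1..n}. t i) = (\<Sum>k\<in>{1..n}. t (n + k))"
    by (rule sum.reindex_cong[of "\<lambda>k. n + k"]) (auto simp: inj_on_def)
  finally show ?thesis by (simp add: sum.distrib)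
qed

definition ell :: "(nat \<Rightarrow> 'k::comm_ring_1) \<Rightarrow> nat \<Rightarrow> nat \<Rightarrow> 'k mpoly" where
  "ell c n k = sg (sg k 1) (c k) + sg (sg (n + k) 1) (c (n + k))"

lemma L_ell:
  assumes Lp: "L \<in> polyring (2*n)" and Lh: "homog 1 L"
  shows "L = (\<Sum>k\<in>{1..n}. ell (\<lambda>i. lk L (sg i 1)) n k)"
proof -
  have "L = (\<Sum>i\<in>{1..2*n}. sg (sg i 1) (lk L (sg i 1)))" by (rule lin_expand[OF Lp Lh])
  also have "\<dots> = (\<Sum>k\<in>{1..n}. sg (sg k 1) (lk L (sg k 1)) + sg (sg (n + k) 1) (lk L (sg (n + k) 1)))"
    by (rule sum_2n)
  also have "\<dots> = (\<Sum>k\<in>{1..n}. ell (\<lambda>i. lk L (sg i 1)) n k)" unfolding ell_def by (rule refl)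
  finally show ?thesis .
qed

lemma ell_poly: "k \<in> {1..n} \<Longrightarrow> ell c n k \<in> polyring (2*n)"
  unfolding ell_def by (intro polyring_add polyring_single) auto

lemma ell_homog: "homog 1 (ell c n k)"
  unfolding ell_def by (intro homog_add homog_single) (simp_all add: mdeg_single)

lemma not_good_sq: "\<not> good \<Delta> (sg i 1 + sg i 1)"
  unfolding good_def by (auto simp: lookup_add intro!: exI[of _ i])

lemma not_good_pair:
  assumes "{k, n + k} \<notin> \<Delta>" shows "\<not> good \<Delta> (sg k 1 + sg (n + k) 1)"
proof -
  have "ks (sg k 1 + sg (n + k) (1::nat)) = {k, n + k}" by (auto simp: keys_add_nat)
  then show ?thesis using assms unfolding good_def by auto
qed

lemma ell_sq:
  assumes g: "simple_graph {1..n} E"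
    and D: "\<Delta> = gen_complex (cover_ideal_supports {1..2*n} (whisker_edges n E))"
    and k: "k \<in> {1..n}"
  shows "ell c n k * ell c n k \<in> defining_ideal (2*n) \<Delta>"
proof -
  let ?a = "sg k (1::nat)" and ?b = "sg (n + k) (1::nat)"
  have nf: "{k, n + k} \<notin> \<Delta>" using pair_nonface[OF g k] D by simp
  have nf': "{n + k, k} \<notin> \<Delta>" using nf by (simp add: insert_commute)
  have kk: "ks ?a \<subseteq> {1..2*n}" "ks ?b \<subseteq> {1..2*n}" using k by auto
  have e: "ell c n k * ell c n k = sg (?a + ?a) (c k * c k) + sg (?a + ?b) (c k * c (n + k))
      + sg (?b + ?a) (c (n + k) * c k) + sg (?b + ?b) (c (n + k) * c (n + k))"
    unfolding ell_def by (simp add: algebra_simps mult_single)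
  have ng3: "\<not> good \<Delta> (?b + ?a)" using not_good_pair[OF nf] by (simp add: add.commute)
  show ?thesis unfolding e
    by (intro I_add I_monomial not_good_sq not_good_pair[OF nf] ng3)
       (use kk in \<open>simp_all add: keys_add_nat\<close>)
qed

lemma good_single:
  assumes g: "simple_graph {1..n} E"
    and D: "\<Delta> = gen_complex (cover_ideal_supports {1..2*n} (whisker_edges n E))"
    and i: "i \<in> {1..2*n}"
  shows "good \<Delta> (sg i 1)"
  unfolding good_def using single_face[OF g i] D by (simp add: lookup_single when_def)

lemma non_inj:
  assumes g: "simple_graph {1..n} E" and n5: "n \<ge> 5"
    and D: "\<Delta> = gen_complex (cover_ideal_supports {1..2*n} (whisker_edges n E))"
    and Lp: "L \<in> polyring (2*n)" and Lh: "homog 1 L"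
  shows "\<exists>f\<in>polyring (2*n). homog 1 f \<and> L ^ (n - 1) * f \<in> defining_ideal (2*n) \<Delta> \<and>
            f \<notin> (defining_ideal (2*n) \<Delta> :: 'k::comm_ring_1 mpoly set)"
proof -
  let ?I = "defining_ideal (2*n) \<Delta> :: 'k mpoly set"
  have dn: "down \<Delta>" using D gen_complex_down by simp
  show ?thesis
  proof (cases "L = 0")
    case True
    have v: "var 1 \<in> polyring (2*n)" using n5 by (intro polyring_var) auto
    have gd: "good \<Delta> (sg 1 1)" by (rule good_single[OF g D]) (use n5 in auto)
    have "var 1 \<notin> ?I"
    proof
      assume "var 1 \<in> ?I"
      from I_easy[OF dn this gd] show False by (simp add: var_def)
    qed
    moreover have "L ^ (n - 1) * var 1 \<in> ?I"
    proof -
      have "L ^ (n - 1) * var 1 = 0" using True n5 by (simp add: power_0_left)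
      then show ?thesis using I_zero by simp
    qed
    moreover have "homog 1 (var 1 :: 'k mpoly)" by (rule homog_var)
    ultimately show ?thesis using v by blast
  next
    case False
    define c where "c = (\<lambda>i. lk L (sg i 1))"
    have Le: "L = (\<Sum>k\<in>{1..n}. ell c n k)" unfolding c_def by (rule L_ell[OF Lp Lh])
    obtain i where i: "i \<in> {1..2*n}" "c i \<noteq> 0"
    proof (rule ccontr)
      assume "\<not> thesis"
      then have "\<forall>i\<in>{1..2*n}. c i = 0" using that by blast
      then have "L = 0" using lin_expand[OF Lp Lh] unfolding c_def by simp
      then show False using False by simp
    qed
    define k where "k = (if i \<le> n then i else i - n)"
    have k: "k \<in> {1..n}" "i = k \<or> i = n + k" using i(1) unfolding k_def by auto
    define m where "m = (if k = 1 then 2 else (1::nat))"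
    have m: "m \<in> {1..n}" "m \<noteq> k" using n5 k unfolding m_def by auto
    define f where "f = ell c n k - ell c n m"
    have fp: "f \<in> polyring (2*n)" unfolding f_def by (intro polyring_diff ell_poly k m)
    have fh: "homog 1 f" unfolding f_def by (intro homog_diff ell_homog)
    have lf: "lk f (sg i 1) = c i"
    proof -
      have "lk (ell c n k) (sg i 1) = c i"
        using k(2) n5 unfolding ell_def by (auto simp: lookup_add lookup_single when_def sg_inj sg_inj')
      moreover have "lk (ell c n m) (sg i 1) = 0"
        using k m unfolding ell_def by (auto simp: lookup_add lookup_single when_def sg_inj sg_inj')
      ultimately show ?thesis unfolding f_def by (simp add: lookup_minus)
    qed
    have gd: "good \<Delta> (sg i 1)" by (rule good_single[OF g D i(1)])
    have nI: "f \<notin> ?I"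
    proof
      assume "f \<in> ?I"
      from I_easy[OF dn this gd] show False using lf i(2) by simp
    qed
    have cK: "card {1..n} = Suc (Suc (n - 2))" using n5 by simp
    have "(ell c n k - ell c n m) * (\<Sum>j\<in>{1..n}. ell c n j) ^ Suc (n - 2) \<in> ?I"
      by (rule kernel[OF _ k(1) m(1) m(2)[symmetric] cK]) (auto intro: ell_poly ell_sq[OF g D])
    moreover have "Suc (n - 2) = n - 1" using n5 by simp
    ultimately have "L ^ (n - 1) * f \<in> ?I" unfolding f_def Le by (simp add: mult.commute)
    then show ?thesis using fp fh nI by blast
  qed
qed



interpretation mv: vector_space "(\<lambda>c p. sg 0 c * (p::'k::field mpoly))"
  by unfold_locales (simp_all add: algebra_simps single_add mult_single)

definition Cg :: "nat set set \<Rightarrow> 'k::comm_ring_1 mpoly \<Rightarrow> 'k mpoly" where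
  "Cg \<Delta> p = (\<Sum>m\<in>{m\<in>ks p. good \<Delta> m}. sg m (lk p m))"

lemma lkC: "lk (Cg \<Delta> p) m = (if good \<Delta> m then lk p m else 0)"
  unfolding Cg_def by (auto simp: lookup_sum lookup_single when_def in_keys_iff)

lemma C_add: "Cg \<Delta> (p + q) = Cg \<Delta> p + Cg \<Delta> q"
  by (rule poly_mapping_eqI) (simp add: lkC lookup_add)

lemma C_diff: "Cg \<Delta> (p - q) = Cg \<Delta> p - Cg \<Delta> q"
  by (rule poly_mapping_eqI) (simp add: lkC lookup_minus)

lemma C_zero: "Cg \<Delta> 0 = 0"
  by (rule poly_mapping_eqI) (simp add: lkC)

lemma C_scale: "Cg \<Delta> (sg 0 c * p) = sg 0 c * Cg \<Delta> p"
  by (rule poly_mapping_eqI) (simp add: lkC lookup_const_mult)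

lemma C_sum: "Cg \<Delta> (sum f A) = (\<Sum>x\<in>A. Cg \<Delta> (f x))"
proof (induction A rule: infinite_finite_induct)
  case (infinite A) then show ?case by (simp add: C_zero)
next
  case empty then show ?case by (simp add: C_zero)
next
  case (insert x F) then show ?case by (simp add: C_add)
qed

lemma C_I: "down \<Delta> \<Longrightarrow> p \<in> defining_ideal N \<Delta> \<Longrightarrow> Cg \<Delta> p = 0"
  by (rule poly_mapping_eqI) (simp add: lkC I_easy)

lemma C_good: "good \<Delta> a \<Longrightarrow> Cg \<Delta> (sg a c) = sg a c"
  by (rule poly_mapping_eqI) (auto simp: lkC lookup_single when_def)

lemma sg1_inj: "sg a (1::'k::comm_ring_1) = sg b 1 \<Longrightarrow> a = b"
  by (metis lookup_single_eq lookup_single_not_eq one_neq_zero)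

lemma non_surj:
  assumes g: "simple_graph {1..n} E" and bip: "bipartite {1..n} E" and n5: "n \<ge> 5"
    and D: "\<Delta> = gen_complex (cover_ideal_supports {1..2*n} (whisker_edges n E))"
    and Lp: "L \<in> polyring (2*n)" and Lh: "homog 1 L"
  shows "\<not> (\<forall>g\<in>polyring (2*n). homog (1 + (n - 1)) g \<longrightarrow>
        (\<exists>f\<in>polyring (2*n). homog 1 f \<and> g - L ^ (n - 1) * f \<in> (defining_ideal (2*n) \<Delta> :: 'k::field mpoly set)))"
proof
  let ?I = "defining_ideal (2*n) \<Delta> :: 'k mpoly set"
  assume surj: "\<forall>g\<in>polyring (2*n). homog (1 + (n - 1)) g \<longrightarrow>
        (\<exists>f\<in>polyring (2*n). homog 1 f \<and> g - L ^ (n - 1) * f \<in> ?I)"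
  have dn: "down \<Delta>" using D gen_complex_down by simp
  let ?Fs = "cover_ideal_supports {1..2*n} (whisker_edges n E)"
  have finF: "finite ?Fs" and cF: "2 * n + 1 \<le> card ?Fs" using count_facets[OF g bip n5] by auto
  define T where "T = (\<lambda>i. Cg \<Delta> (L ^ (n - 1) * var i)) ` {1..2*n}"
  define S where "S = (\<lambda>F. sg (ind F) (1::'k)) ` ?Fs"
  have finT: "finite T" unfolding T_def by simp
  have "card T \<le> card {1..2*n}" unfolding T_def by (rule card_image_le) simp
  then have cT: "card T \<le> 2 * n" by simp
  have Fprops: "F \<subseteq> {1..2*n} \<and> finite F \<and> card F = n \<and> good \<Delta> (ind F)" if F: "F \<in> ?Fs" for F
  proof -
    have mvc: "min_vertex_cover {1..2*n} (whisker_edges n E) F" using F unfolding cover_ideal_supports_def by simp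
    have sub: "F \<subseteq> {1..2*n}" using mvc_sub[OF mvc] .
    have fin: "finite F" using finite_subset[OF sub] by simp
    have "F \<in> \<Delta>" using F D unfolding gen_complex_def by blast
    then have "good \<Delta> (ind F)" unfolding good_def using fin by (simp add: lookup_ind keys_ind)
    then show ?thesis using sub fin mvc_card[OF g mvc] by simp
  qed
  have injS: "inj_on (\<lambda>F. sg (ind F) (1::'k)) ?Fs"
  proof (rule inj_onI)
    fix F G assume F: "F \<in> ?Fs" and G: "G \<in> ?Fs" and e: "sg (ind F) (1::'k) = sg (ind G) 1"
    have i: "ind F = ind G" using sg1_inj[OF e] .
    have "F = ks (ind F)" using Fprops[OF F] keys_ind by metis
    also have "\<dots> = ks (ind G)" using i by (rule arg_cong)
    also have "\<dots> = G" using Fprops[OF G] keys_ind by metis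
    finally show "F = G" .
  qed
  have cS: "card S = card ?Fs" unfolding S_def by (rule card_image[OF injS])
  have span: "S \<subseteq> mv.span T"
  proof
    fix v assume "v \<in> S"
    then obtain F where F: "F \<in> ?Fs" "v = sg (ind F) 1" unfolding S_def by blast
    have xm: "xmon F = (sg (ind F) 1 :: 'k mpoly)" using Fprops[OF F(1)] by (simp add: xmon_eq)
    have vp: "v \<in> polyring (2*n)" unfolding F(2) by (rule polyring_single) (use Fprops[OF F(1)] in \<open>simp add: keys_ind\<close>)
    have vh: "homog (1 + (n - 1)) v" unfolding F(2) by (rule homog_single) (use Fprops[OF F(1)] n5 in \<open>simp add: mdeg_ind\<close>)
    obtain f where f: "f \<in> polyring (2*n)" "homog 1 f" "v - L ^ (n - 1) * f \<in> ?I"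
      using surj vp vh by blast
    define d where "d = (\<lambda>i. lk f (sg i 1))"
    have fe: "f = (\<Sum>i\<in>{1..2*n}. sg 0 (d i) * var i)"
      unfolding d_def var_def using lin_expand[OF f(1) f(2)] by (simp add: mult_single)
    have Lf: "L ^ (n - 1) * f = (\<Sum>i\<in>{1..2*n}. sg 0 (d i) * (L ^ (n - 1) * var i))"
      unfolding fe by (simp add: sum_distrib_left algebra_simps)
    have "Cg \<Delta> v - Cg \<Delta> (L ^ (n - 1) * f) = 0" using C_I[OF dn f(3)] by (simp add: C_diff)
    then have "Cg \<Delta> v = Cg \<Delta> (L ^ (n - 1) * f)" by simp
    also have "\<dots> = (\<Sum>i\<in>{1..2*n}. sg 0 (d i) * Cg \<Delta> (L ^ (n - 1) * var i))"
      unfolding Lf by (simp add: C_sum C_scale)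
    finally have cv: "Cg \<Delta> v = \<dots>" .
    have "Cg \<Delta> v = v" unfolding F(2) by (rule C_good) (use Fprops[OF F(1)] in simp)
    then have "v = (\<Sum>i\<in>{1..2*n}. sg 0 (d i) * Cg \<Delta> (L ^ (n - 1) * var i))" using cv by simp
    also have "\<dots> \<in> mv.span T"
      by (intro mv.span_sum mv.span_scale mv.span_base) (auto simp: T_def)
    finally show "v \<in> mv.span T" .
  qed
  have indep: "mv.independent S"
    unfolding mv.independent_explicit_module
  proof (intro allI impI)
    fix t u v assume t: "finite t" "t \<subseteq> S" and z: "(\<Sum>w\<in>t. sg 0 (u w) * w) = 0" and v: "v \<in> t"
    obtain a where a: "v = sg a 1" using v t(2) unfolding S_def by blast
    have "lk (\<Sum>w\<in>t. sg 0 (u w) * w) a = (\<Sum>w\<in>t. u w * lk w a)"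
      by (simp add: lookup_sum lookup_const_mult)
    also have "\<dots> = (\<Sum>w\<in>t. if w = v then u w else 0)"
    proof (rule sum.cong)
      fix w assume w: "w \<in> t"
      obtain b where b: "w = sg b 1" using w t(2) unfolding S_def by blast
      show "u w * lk w a = (if w = v then u w else 0)"
        using a b sg1_inj[of b a] by (auto simp: lookup_single when_def)
    qed simp
    also have "\<dots> = u v" using t(1) v by simp
    finally show "u v = 0" using z by simp
  qed
  have "card S \<le> card T" using mv.independent_span_bound[OF finT indep span] by simp
  then show False using cS cT cF by simp
qed



theorem corollary5p13:
  fixes n :: nat and E :: "nat set set"
  assumes "n \<ge> 5"
    and "simple_graph {1..n} E"
    and "bipartite {1..n} E"
  defines "\<Delta> \<equiv> gen_complex (cover_ideal_supports {1..2*n} (whisker_edges n E))"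
  shows "level_quot (2*n) (defining_ideal (2*n) \<Delta> :: 'k::field_char_0 mpoly set)
     \<and> \<not> strong_lefschetz (2*n) (defining_ideal (2*n) \<Delta> :: 'k mpoly set)"
proof
  have D: "\<Delta> = gen_complex (cover_ideal_supports {1..2*n} (whisker_edges n E))"
    using assms(4) by simp
  show "level_quot (2*n) (defining_ideal (2*n) \<Delta> :: 'k::field_char_0 mpoly set)"
    by (rule level_part[OF assms(2) D])
  show "\<not> strong_lefschetz (2*n) (defining_ideal (2*n) \<Delta> :: 'k mpoly set)"
    unfolding strong_lefschetz_def
  proof
    assume "\<exists>L\<in>polyring (2*n). homog 1 L \<and> (\<forall>i j. full_rank_mult (2*n) (defining_ideal (2*n) \<Delta> :: 'k mpoly set) L i j)"
    then obtain L :: "'k mpoly" where Lp: "L \<in> polyring (2*n)" and Lh: "homog 1 L"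
      and fr: "full_rank_mult (2*n) (defining_ideal (2*n) \<Delta>) L 1 (n - 1)" by blast
    from fr show False unfolding full_rank_mult_def
    proof
      assume inj: "\<forall>f\<in>polyring (2*n). homog 1 f \<longrightarrow> L ^ (n - 1) * f \<in> defining_ideal (2*n) \<Delta> \<longrightarrow> f \<in> defining_ideal (2*n) \<Delta>"
      obtain f where "f \<in> polyring (2*n)" "homog 1 f" "L ^ (n - 1) * f \<in> defining_ideal (2*n) \<Delta>"
        "f \<notin> (defining_ideal (2*n) \<Delta> :: 'k mpoly set)"
        using non_inj[OF assms(2) assms(1) D Lp Lh] by blast
      then show False using inj by blast
    next
      assume "\<forall>g\<in>polyring (2*n). homog (1 + (n - 1)) g \<longrightarrow>
        (\<exists>f\<in>polyring (2*n). homog 1 f \<and> g - L ^ (n - 1) * f \<in> defining_ideal (2*n) \<Delta>)"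
      then show False using non_surj[OF assms(2) assms(3) assms(1) D Lp Lh] by blast
    qed
  qed
qed

end
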